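(* Let $A\subset\mathbb{R}^d$ and $0<r<\operatorname{reach}A$. Then the mapping $\psi_1^A$ is $\frac1r$-Lipschitz on $T_1(A)$.
   Context: For $A\subset\mathbb{R}^d$ and $a\in A$, $\operatorname{reach}(A,a)=\sup\{r\geq0: B(a,r)\subset\operatorname{Unp}A\}$, where $\operatorname{Unp}A$ is the set of points having a unique nearest point in $A$, and $\operatorname{reach}A=\inf_{a\in A}\operatorname{reach}(A,a)$. $\operatorname{Tan}(A,x)$ is the tangent cone ($u\in\operatorname{Tan}(A,x)$ iff $u=0$ or $r_i(x_i-x)\to u$ for some $x\neq x_i\in A$, $x_i\to x$, $r_i>0$), $\widetilde{\operatorname{Tan}}(A,x)=\operatorname{span}\operatorname{Tan}(A,x)$, $T_1(A)=\{x\in A:\dim\widetilde{\operatorname{Tan}}(A,x)=1\}$ and $\psi_1^A(x)=\widetilde{\operatorname{Tan}}(A,x)\in G(d,1)$ for $x\in T_1(A)$. $G(d,1)$ carries the metric $\rho_1(U,V)=\max\big(\sup_{u\in U,|u|=1}\mathrm{dist}(u,V),\sup_{v\in V,|v|=1}\mathrm{dist}(v,U)\big)$. *)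

theory Defs
  imports "HOL-Analysis.Analysis"
begin

definition Unp :: "'a::euclidean_space set \<Rightarrow> 'a set" where
  "Unp A = {x. \<exists>!a. a \<in> A \<and> (\<forall>b\<in>A. dist x a \<le> dist x b)}"

definition reach_at :: "'a::euclidean_space set \<Rightarrow> 'a \<Rightarrow> ereal" where
  "reach_at A a = Sup {ereal r | r. r \<ge> 0 \<and> ball a r \<subseteq> Unp A}"

definition reach :: "'a::euclidean_space set \<Rightarrow> ereal" where
  "reach A = (INF a\<in>A. reach_at A a)"

definition Tan :: "'a::euclidean_space set \<Rightarrow> 'a \<Rightarrow> 'a set" where
  "Tan A x = {u. u = 0 \<or> (\<exists>xs rs. (\<forall>i. xs i \<in> A \<and> xs i \<noteq> x \<and> rs i > (0::real)) \<and>
       xs \<longlonglongrightarrow> x \<and> (\<lambda>i. rs i *\<^sub>R (xs i - x)) \<longlonglongrightarrow> u)}"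

definition Tan_span :: "'a::euclidean_space set \<Rightarrow> 'a \<Rightarrow> 'a set" where
  "Tan_span A x = span (Tan A x)"

definition T1 :: "'a::euclidean_space set \<Rightarrow> 'a set" where
  "T1 A = {x \<in> A. dim (Tan_span A x) = 1}"

text \<open>psi_1^A(x) in G(d,1), represented as the 1-dimensional linear subspace itself.\<close>
definition psi1 :: "'a::euclidean_space set \<Rightarrow> 'a \<Rightarrow> 'a set" where
  "psi1 A x = Tan_span A x"

definition rho1 :: "'a::euclidean_space set \<Rightarrow> 'a set \<Rightarrow> real" where
  "rho1 U V = max (SUP u\<in>{u\<in>U. norm u = 1}. infdist u V)
                  (SUP v\<in>{v\<in>V. norm v = 1}. infdist v U)"

end

theory Submission
  imports Defs
begin

definition nn :: "'a::euclidean_space set \<Rightarrow> 'a \<Rightarrow> 'a" where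
  "nn A p = (THE a. a \<in> A \<and> (\<forall>b\<in>A. dist p a \<le> dist p b))"

lemma nn_prop:
  assumes "p \<in> Unp A"
  shows "nn A p \<in> A" "\<And>b. b \<in> A \<Longrightarrow> dist p (nn A p) \<le> dist p b"
proof -
  have "\<exists>!a. a \<in> A \<and> (\<forall>b\<in>A. dist p a \<le> dist p b)" using assms by (simp add: Unp_def)
  from theI'[OF this] show "nn A p \<in> A" "\<And>b. b \<in> A \<Longrightarrow> dist p (nn A p) \<le> dist p b"
    unfolding nn_def by auto
qed

lemma nn_unique:
  assumes "p \<in> Unp A" "a \<in> A" "\<And>b. b \<in> A \<Longrightarrow> dist p a \<le> dist p b"
  shows "nn A p = a"
proof -
  have "\<exists>!a. a \<in> A \<and> (\<forall>b\<in>A. dist p a \<le> dist p b)" using assms by (simp add: Unp_def)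
  from the1_equality[OF this] assms show ?thesis unfolding nn_def by auto
qed

lemma nn_infdist:
  assumes "p \<in> Unp A"
  shows "dist p (nn A p) = infdist p A"
proof -
  have "A \<noteq> {}" using nn_prop(1)[OF assms] by auto
  then show ?thesis using nn_prop[OF assms]
    by (metis antisym cINF_greatest infdist_le infdist_notempty)
qed

lemma closed_A:
  fixes A :: "'a::euclidean_space set"
  assumes R: "R > 0" and U: "\<And>a. a \<in> A \<Longrightarrow> ball a R \<subseteq> Unp A"
  shows "closed A"
proof -
  have "z \<in> A" if z: "z \<in> closure A" for z
  proof -
    obtain a where a: "a \<in> A" "dist a z < R" using z R closure_approachable by blast
    then have zU: "z \<in> Unp A" using U[OF a(1)] by (auto simp: dist_commute)
    have "dist z (nn A z) \<le> e" if "e > 0" for e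
    proof -
      obtain a' where "a' \<in> A" "dist a' z < e" using z \<open>e>0\<close> closure_approachable by blast
      then show ?thesis using nn_prop(2)[OF zU, of a'] by (simp add: dist_commute)
    qed
    then have "dist z (nn A z) \<le> 0" by (meson dense not_le)
    then have "z = nn A z" by simp
    then show ?thesis using nn_prop(1)[OF zU] by simp
  qed
  then show ?thesis using closure_subset_eq by blast
qed

lemma nn_cont:
  fixes A :: "'a::euclidean_space set"
  assumes "closed A" "compact S" "S \<subseteq> Unp A"
  shows "continuous_on S (nn A)"
proof (cases "S = {}")
  case True then show ?thesis by simp
next
  case False
  then obtain s0 where "s0 \<in> S" by auto
  then have "nn A s0 \<in> A" using nn_prop assms by blast
  then obtain a0 where a0: "a0 \<in> A" by blast
  obtain M where M: "\<And>y. y \<in> S \<Longrightarrow> norm y \<le> M"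
    using compact_imp_bounded[OF assms(2)] bounded_iff by blast
  define T where "T = A \<inter> cball 0 (2*M + norm a0)"
  have cT: "compact T" unfolding T_def using assms(1)
    by (simp add: compact_Int_closed closed_Int_compact)
  have fim: "nn A \<in> S \<rightarrow> T"
  proof
    fix y assume y: "y \<in> S"
    then have yU: "y \<in> Unp A" using assms by auto
    have "dist y (nn A y) \<le> dist y a0" using nn_prop(2)[OF yU a0] .
    moreover have "norm (nn A y) \<le> norm y + dist y (nn A y)"
      by (metis dist_commute dist_norm norm_triangle_sub)
    moreover have "dist y a0 \<le> norm y + norm a0" by (simp add: dist_norm norm_triangle_ineq4)
    ultimately have "norm (nn A y) \<le> 2*M + norm a0" using M[OF y] by linarith
    then show "nn A y \<in> T" unfolding T_def using nn_prop(1)[OF yU] by simp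
  qed
  have eq: "(\<lambda>x. Pair x (nn A x)) ` S = (S \<times> A) \<inter> {z. dist (fst z) (snd z) - infdist (fst z) A = 0}"
  proof (intro set_eqI iffI)
    fix z assume "z \<in> (\<lambda>x. Pair x (nn A x)) ` S"
    then obtain y where "y \<in> S" "z = (y, nn A y)" by auto
    then show "z \<in> (S \<times> A) \<inter> {z. dist (fst z) (snd z) - infdist (fst z) A = 0}"
      using assms nn_prop nn_infdist[of y A] by auto
  next
    fix z assume z: "z \<in> (S \<times> A) \<inter> {z. dist (fst z) (snd z) - infdist (fst z) A = 0}"
    obtain y b where zz: "z = (y,b)" by (cases z)
    with z have y: "y \<in> S" "b \<in> A" "dist y b = infdist y A" by auto
    then have "nn A y = b" using assms
      by (intro nn_unique) (auto simp: infdist_le)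
    then show "z \<in> (\<lambda>x. Pair x (nn A x)) ` S" using zz y by auto
  qed
  have "closed ((S \<times> A) \<inter> {z. dist (fst z) (snd z) - infdist (fst z) A = 0})"
    using assms
    by (intro closed_Int closed_Times closed_Collect_eq continuous_intros)
       (auto intro: compact_imp_closed)
  then show ?thesis using continuous_from_closed_graph[OF cT fim] eq by simp
qed

lemma nn_segment:
  assumes "p \<in> Unp A" "0 \<le> t" "t \<le> 1" "a + t *\<^sub>R (p - a) \<in> Unp A" "a = nn A p"
  shows "nn A (a + t *\<^sub>R (p - a)) = a"
proof -
  let ?w = "a + t *\<^sub>R (p - a)"
  have aA: "a \<in> A" using nn_prop(1)[OF assms(1)] assms(5) by simp
  have e1: "p - ?w = (1 - t) *\<^sub>R (p - a)" by (simp add: algebra_simps)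
  have e2: "?w - a = t *\<^sub>R (p - a)" by simp
  have d1: "dist p ?w = (1 - t) * norm (p - a)"
    unfolding dist_norm e1 using assms(3) by simp
  have d2: "dist ?w a = t * norm (p - a)"
    unfolding dist_norm e2 using assms(2) by simp
  have "dist p a = dist p ?w + dist ?w a"
    unfolding d1 d2 by (simp add: dist_norm algebra_simps)
  moreover have "dist p a \<le> dist p b" if "b \<in> A" for b
    using nn_prop(2)[OF assms(1) that] assms(5) by simp
  ultimately have "dist ?w a \<le> dist ?w b" if "b \<in> A" for b
    using that dist_triangle[of p b ?w] by (smt (verit, best) dist_commute)
  then show ?thesis using nn_unique[OF assms(4) aA] by blast
qed

lemma ray_step:
  fixes A :: "'a::euclidean_space set"
  assumes clA: "closed A" and aA: "a \<in> A" and U: "ball a R \<subseteq> Unp A" and m: "norm m = 1"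
    and s: "0 < s" and eta: "0 < \<eta>" "\<eta> \<le> s/2" "s + \<eta> < R"
    and nv: "nn A (a + s *\<^sub>R m) = a"
  shows "nn A (a + (s + \<eta>) *\<^sub>R m) = a"
proof -
  define v where "v = a + s *\<^sub>R m"
  define K where "K = cball v \<eta>"
  have KU: "K \<subseteq> Unp A"
  proof
    fix y assume "y \<in> K"
    then have "dist v y \<le> \<eta>" by (simp add: K_def)
    moreover have "dist a v = s" using m s by (simp add: v_def dist_norm)
    ultimately have "dist a y < R" using dist_triangle[of a y v] eta by linarith
    then show "y \<in> Unp A" using U by auto
  qed
  have vK: "v \<in> K" using eta by (simp add: K_def)
  have vd: "dist v (nn A v) = s" using nv m s by (simp add: v_def dist_norm)
  have dpos: "norm (y - nn A y) \<ge> \<eta>" if "y \<in> K" for y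
  proof -
    have yU: "y \<in> Unp A" using KU that by auto
    have "dist v (nn A v) \<le> dist v (nn A y)"
      using nn_prop(2)[OF subsetD[OF KU vK] nn_prop(1)[OF yU]] .
    also have "\<dots> \<le> dist v y + dist y (nn A y)" by (rule dist_triangle)
    finally have "s \<le> dist v y + dist y (nn A y)" using vd by simp
    moreover have "dist v y \<le> \<eta>" using that by (simp add: K_def)
    ultimately show ?thesis using eta by (simp add: dist_norm)
  qed
  define F where "F y = v + \<eta> *\<^sub>R ((y - nn A y) /\<^sub>R norm (y - nn A y))" for y
  have contF: "continuous_on K F"
  proof -
    have c: "continuous_on K (nn A)"
      using nn_cont[OF clA _ KU] by (simp add: K_def)
    have "\<forall>y\<in>K. norm (y - nn A y) \<noteq> 0" using dpos eta by force
    then show ?thesis unfolding F_def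
      by (intro continuous_intros c) auto
  qed
  have Fim: "F \<in> K \<rightarrow> K"
  proof
    fix y assume "y \<in> K"
    then have "norm (y - nn A y) \<noteq> 0" using dpos eta by force
    then show "F y \<in> K" using eta by (simp add: F_def K_def dist_norm)
  qed
  obtain y where yK: "y \<in> K" and Fy: "F y = y"
    using brouwer[OF compact_cball convex_cball _ contF[unfolded K_def] Fim[unfolded K_def]]
    using eta by (auto simp: K_def)
  define b where "b = nn A y"
  define d where "d = norm (y - b)"
  have yU: "y \<in> Unp A" using KU yK by auto
  have dge: "d \<ge> \<eta>" using dpos[OF yK] by (simp add: d_def b_def)
  have dpos': "d > 0" using dge eta by simp
  define n where "n = (y - b) /\<^sub>R d"
  have yb: "y - b = d *\<^sub>R n" using dpos' by (simp add: n_def)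
  have nnorm: "norm n = 1" using dpos' by (simp add: n_def d_def)
  have yv: "y = v + \<eta> *\<^sub>R n" using Fy by (simp add: F_def n_def d_def b_def)
  have vb: "v = b + ((d - \<eta>) / d) *\<^sub>R (y - b)"
  proof -
    have "v = y - \<eta> *\<^sub>R n" using yv by simp
    also have "\<dots> = b + (d - \<eta>) *\<^sub>R n" using yb by (simp add: algebra_simps)
    also have "\<dots> = b + ((d - \<eta>) / d) *\<^sub>R (y - b)" using yb dpos' by simp
    finally show ?thesis .
  qed
  have "nn A (b + ((d - \<eta>) / d) *\<^sub>R (y - b)) = b"
    apply (rule nn_segment[OF yU])
    using dge dpos' eta KU vK vb b_def by (auto simp: divide_simps)
  then have "b = a" using nv vb by (simp add: v_def)
  have "v - a = (d - \<eta>) *\<^sub>R n" using vb yb dpos' \<open>b = a\<close> by simp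
  then have smn: "s *\<^sub>R m = (d - \<eta>) *\<^sub>R n" by (simp add: v_def)
  then have "norm (s *\<^sub>R m) = norm ((d - \<eta>) *\<^sub>R n)" by simp
  then have "s = d - \<eta>" using m nnorm s dge by simp
  then have "m = n" using smn s by simp
  have "y = a + (s + \<eta>) *\<^sub>R m"
    using yv \<open>m = n\<close> by (simp add: v_def algebra_simps)
  then show ?thesis using \<open>b = a\<close> b_def by simp
qed

lemma ray:
  fixes A :: "'a::euclidean_space set"
  assumes clA: "closed A" and aA: "a \<in> A" and U: "ball a R \<subseteq> Unp A" and m: "norm m = 1"
    and s0: "0 < s0" "s0 < R" and nv: "nn A (a + s0 *\<^sub>R m) = a"
    and s: "0 \<le> s" "s < R"
  shows "nn A (a + s *\<^sub>R m) = a"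
proof -
  have main: "\<forall>s. s0 \<le> s \<and> s < R \<and> s \<le> s0 * (3/2)^k \<longrightarrow> nn A (a + s *\<^sub>R m) = a" for k
  proof (induction k)
    case 0
    then show ?case using nv by auto
  next
    case (Suc k)
    show ?case
    proof (intro allI impI)
      fix s assume hs: "s0 \<le> s \<and> s < R \<and> s \<le> s0 * (3/2)^Suc k"
      show "nn A (a + s *\<^sub>R m) = a"
      proof (cases "s \<le> s0 * (3/2)^k")
        case True then show ?thesis using Suc.IH hs by auto
      next
        case False
        define s' where "s' = s0 * (3/2)^k"
        have s'pos: "s' \<ge> s0" unfolding s'_def using s0 by (simp add: mult_le_cancel_left1)
        have n': "nn A (a + s' *\<^sub>R m) = a" using Suc.IH s'pos hs False by (simp add: s'_def)
        have le: "s \<le> s' * (3/2)" using hs by (simp add: s'_def)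
        have gt: "s' < s" using False by (simp add: s'_def)
        have "nn A (a + (s' + (s - s')) *\<^sub>R m) = a"
          apply (rule ray_step[OF clA aA U m _ _ _ _ n'])
          using s'pos s0 gt le hs by linarith+
        then show ?thesis by simp
      qed
    qed
  qed
  show ?thesis
  proof (cases "s0 \<le> s")
    case True
    have "1 < (3/2::real)" by simp
    then obtain k where "s / s0 < (3/2::real)^k" using real_arch_pow by blast
    then have "s < (3/2)^k * s0" using s0 pos_divide_less_eq by blast
    then have "s \<le> s0 * (3/2)^k" by (simp only: mult.commute less_imp_le)
    then show ?thesis using main True s by auto
  next
    case False
    have pU: "a + s0 *\<^sub>R m \<in> Unp A"
    proof -
      have "dist a (a + s0 *\<^sub>R m) = s0" using s0 m by (simp add: dist_norm)
      then show ?thesis using U s0 by auto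
    qed
    have wU: "a + s *\<^sub>R m \<in> Unp A"
    proof -
      have "dist a (a + s *\<^sub>R m) = s" using s m by (simp add: dist_norm)
      then show ?thesis using U s by auto
    qed
    have eq: "a + s *\<^sub>R m = a + (s / s0) *\<^sub>R ((a + s0 *\<^sub>R m) - a)" using s0 by simp
    have t0: "0 \<le> s / s0" using s s0 by simp
    have t1: "s / s0 \<le> 1" using False s0 by simp
    have "nn A (a + (s / s0) *\<^sub>R ((a + s0 *\<^sub>R m) - a)) = a"
      by (rule nn_segment[OF pU t0 t1 wU[unfolded eq] nv[symmetric]])
    then show ?thesis using eq by (simp only:)
  qed
qed

lemma tan_eps:
  fixes A :: "'a::euclidean_space set"
  assumes hT: "\<And>u. u \<in> Tan A x \<Longrightarrow> n \<bullet> u \<le> 0" and e: "\<epsilon> > 0"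
  shows "\<exists>\<delta>>0. \<forall>q\<in>A. 0 < dist q x \<and> dist q x < \<delta> \<longrightarrow> n \<bullet> (q - x) \<le> \<epsilon> * norm (q - x)"
proof (rule ccontr)
  assume "\<not> ?thesis"
  then have "\<forall>k::nat. \<exists>q. q \<in> A \<and> 0 < dist q x \<and> dist q x < inverse (real (Suc k)) \<and> n \<bullet> (q - x) > \<epsilon> * norm (q - x)"
    by (metis inverse_positive_iff_positive not_le of_nat_0_less_iff zero_less_Suc)
  then obtain q where q: "\<And>k. q k \<in> A" "\<And>k. 0 < dist (q k) x" "\<And>k. dist (q k) x < inverse (real (Suc k))"
      "\<And>k. n \<bullet> (q k - x) > \<epsilon> * norm (q k - x)"
    by metis
  define d where "d k = (q k - x) /\<^sub>R norm (q k - x)" for k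
  have dS: "d k \<in> sphere 0 1" for k using q(2)[of k] by (simp add: d_def dist_norm)
  obtain u r where u: "u \<in> sphere 0 1" "strict_mono r" "(d \<circ> r) \<longlonglongrightarrow> u"
    using seq_compactE[OF compact_imp_seq_compact[OF compact_sphere] ] dS by metis
  have qx: "q \<longlonglongrightarrow> x"
  proof -
    have "(\<lambda>k. dist (q k) x) \<longlonglongrightarrow> 0"
      by (rule Lim_null_comparison[OF _ LIMSEQ_inverse_real_of_nat]) (use q(3) less_imp_le in \<open>auto intro!: always_eventually\<close>)
    then show ?thesis using tendsto_dist_iff by blast
  qed
  have "u \<in> Tan A x"
    unfolding Tan_def
  proof (intro CollectI disjI2 exI conjI allI)
    show "(q \<circ> r) i \<in> A" for i using q(1) by simp
    show "(q \<circ> r) i \<noteq> x" for i using q(2)[of "r i"] by auto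
    show "inverse (norm ((q \<circ> r) i - x)) > 0" for i using q(2)[of "r i"] by (simp add: dist_norm)
    show "(q \<circ> r) \<longlonglongrightarrow> x" using LIMSEQ_subseq_LIMSEQ[OF qx u(2)] .
    show "(\<lambda>i. inverse (norm ((q \<circ> r) i - x)) *\<^sub>R ((q \<circ> r) i - x)) \<longlonglongrightarrow> u"
      using u(3) by (simp add: d_def comp_def divide_inverse_commute)
  qed
  then have "n \<bullet> u \<le> 0" using hT by blast
  moreover have "\<epsilon> \<le> n \<bullet> u"
  proof (rule LIMSEQ_le_const)
    show "(\<lambda>k. n \<bullet> (d \<circ> r) k) \<longlonglongrightarrow> n \<bullet> u" by (intro tendsto_intros u(3))
    show "\<exists>N. \<forall>k\<ge>N. \<epsilon> \<le> n \<bullet> (d \<circ> r) k"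
    proof (intro exI allI impI)
      fix k
      have "norm (q (r k) - x) > 0" using q(2)[of "r k"] by (simp add: dist_norm)
      then show "\<epsilon> \<le> n \<bullet> (d \<circ> r) k" using q(4)[of "r k"]
        by (simp add: d_def inner_commute divide_simps)
    qed
  qed
  ultimately show False using e by simp
qed

lemma approx_normal:
  fixes A :: "'a::euclidean_space set"
  assumes clA: "closed A" and xA: "x \<in> A" and UR: "\<And>a. a \<in> A \<Longrightarrow> ball a R \<subseteq> Unp A"
    and R: "R > 0" and n: "norm n = 1" and hT: "\<And>u. u \<in> Tan A x \<Longrightarrow> n \<bullet> u \<le> 0"
    and e: "0 < \<epsilon>" "\<epsilon> \<le> 1/4"
  shows "\<exists>t0>0. \<forall>t. 0 < t \<and> t < t0 \<longrightarrow> (\<exists>q m. q \<in> A \<and> norm m = 1 \<and>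
           (\<forall>s'. 0 \<le> s' \<and> s' < R \<longrightarrow> nn A (q + s' *\<^sub>R m) = q) \<and>
           dist q x \<le> 2 * \<epsilon> * t \<and> norm (m - n) \<le> 8 * \<epsilon>)"
proof -
  obtain \<delta> where d: "\<delta> > 0" and dq: "\<And>q. q \<in> A \<Longrightarrow> 0 < dist q x \<Longrightarrow> dist q x < \<delta> \<Longrightarrow> n \<bullet> (q - x) \<le> \<epsilon> * norm (q - x)"
    using tan_eps[OF hT e(1)] by blast
  define \<rho> where "\<rho> = R / 2"
  have rho: "\<rho> > 0" "\<rho> < R" using R by (auto simp: \<rho>_def)
  show ?thesis
  proof (intro exI[of _ "min (\<delta>/2) \<rho>"] conjI allI impI)
    show "0 < min (\<delta>/2) \<rho>" using d rho by simp
    fix t assume t: "0 < t \<and> t < min (\<delta>/2) \<rho>"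
    then have t1: "0 < t" "t < \<delta>/2" "t < \<rho>" by auto
    define p where "p = x + t *\<^sub>R n"
    have dpx: "dist p x = t" using n t1 by (simp add: p_def dist_norm)
    have pU: "p \<in> Unp A" using UR[OF xA] dpx rho t1 by (auto simp: dist_commute)
    define q where "q = nn A p"
    have qA: "q \<in> A" using nn_prop(1)[OF pU] by (simp add: q_def)
    have Dle: "dist p q \<le> t" using nn_prop(2)[OF pU xA] dpx by (simp add: q_def)
    have pnA: "p \<notin> A"
    proof
      assume "p \<in> A"
      then have "n \<bullet> (p - x) \<le> \<epsilon> * norm (p - x)" using dq[of p] dpx t1 by auto
      moreover have "n \<bullet> n = 1" using n by (simp flip: power2_norm_eq_inner)
      ultimately have "t \<le> \<epsilon> * t" using t1 n by (simp add: p_def inner_commute)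
      then show False using t1 e by (simp add: mult_le_cancel_right1)
    qed
    define D where "D = dist p q"
    have Dpos: "D > 0" using pnA qA by (auto simp: D_def)
    define m where "m = (p - q) /\<^sub>R D"
    have mn: "norm m = 1" using Dpos by (simp add: m_def D_def dist_norm)
    have Dm: "D *\<^sub>R m = p - q" using Dpos by (simp add: m_def)
    have qDm: "q + D *\<^sub>R m = p" using Dm by simp
    have rayq: "\<forall>s'. 0 \<le> s' \<and> s' < R \<longrightarrow> nn A (q + s' *\<^sub>R m) = q"
      using ray[OF clA qA UR[OF qA] mn Dpos] Dle t1 rho qDm q_def by (auto simp: D_def)
    define e where "e = x - q"
    have ne: "norm e = dist q x" by (simp add: e_def dist_norm norm_minus_commute)
    have Dm2: "D *\<^sub>R m = t *\<^sub>R n + e" using Dm by (simp add: p_def e_def algebra_simps)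
    have ball: "2 * \<rho> * (m \<bullet> e) \<le> norm e ^ 2"
    proof -
      have "q + \<rho> *\<^sub>R m \<in> Unp A" using UR[OF qA] rho mn by (auto simp: dist_norm)
      moreover have "nn A (q + \<rho> *\<^sub>R m) = q" using rayq rho by auto
      ultimately have "dist (q + \<rho> *\<^sub>R m) q \<le> dist (q + \<rho> *\<^sub>R m) x"
        using nn_prop(2)[of "q + \<rho> *\<^sub>R m" A x] xA by simp
      then have "\<rho> \<le> norm (\<rho> *\<^sub>R m - e)" using rho mn by (simp add: dist_norm e_def algebra_simps)
      then have "\<rho>^2 \<le> (norm (\<rho> *\<^sub>R m - e))^2" using rho by simp
      also have "\<dots> = \<rho>^2 - 2 * \<rho> * (m \<bullet> e) + norm e ^ 2"
      proof -
        have mm: "m \<bullet> m = 1" using mn by (metis norm_eq_1)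
        show ?thesis unfolding power2_norm_eq_inner using mm
          by (simp add: inner_diff_left inner_diff_right inner_commute power2_eq_square algebra_simps)
      qed
      finally show ?thesis by simp
    qed
    have key: "2 * \<rho> * (t * (n \<bullet> e) + norm e ^ 2) \<le> t * norm e ^ 2"
    proof -
      have eq2: "D * (m \<bullet> e) = t * (n \<bullet> e) + norm e ^ 2"
        using arg_cong[OF Dm2, of "\<lambda>v. v \<bullet> e"] by (simp add: inner_add_left power2_norm_eq_inner)
      have "2 * \<rho> * (t * (n \<bullet> e) + norm e ^ 2) = 2 * \<rho> * (D * (m \<bullet> e))" using eq2 by simp
      also have "\<dots> = D * (2 * \<rho> * (m \<bullet> e))" by (simp add: algebra_simps)
      also have "\<dots> \<le> D * norm e ^ 2" using ball Dpos by simp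
      also have "\<dots> \<le> t * norm e ^ 2" using Dle by (simp add: D_def mult_right_mono)
      finally show ?thesis .
    qed
    have eb: "norm e \<le> 2 * \<epsilon> * t"
    proof (cases "e = 0")
      case True then show ?thesis using e t1 by simp
    next
      case False
      have "dist q x \<le> dist q p + dist p x" by (rule dist_triangle)
      then have "dist q x \<le> 2 * t" using Dle dpx by (simp add: dist_commute)
      then have "- (n \<bullet> e) \<le> \<epsilon> * norm e" using dq[OF qA] False t1 ne
        by (simp add: e_def inner_diff_right norm_minus_commute)
      then have m1: "2 * \<rho> * t * (- (n \<bullet> e)) \<le> 2 * \<rho> * t * (\<epsilon> * norm e)"
        by (rule mult_left_mono) (use rho t1 in auto)
      have k2: "2 * \<rho> * t * (n \<bullet> e) + 2 * \<rho> * norm e ^ 2 \<le> t * norm e ^ 2"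
        using key by (simp add: algebra_simps)
      have "2 * \<rho> * norm e ^ 2 \<le> t * norm e ^ 2 + 2 * \<rho> * t * (\<epsilon> * norm e)"
        using m1 k2 by linarith
      then have "\<rho> * norm e ^ 2 \<le> 2 * \<rho> * t * (\<epsilon> * norm e)"
      proof -
        have "t * norm e ^ 2 \<le> \<rho> * norm e ^ 2" using t1 by (intro mult_right_mono) auto
        then show ?thesis using \<open>2 * \<rho> * norm e ^ 2 \<le> t * norm e ^ 2 + 2 * \<rho> * t * (\<epsilon> * norm e)\<close> by linarith
      qed
      then have "\<rho> * norm e * norm e \<le> \<rho> * norm e * (2 * \<epsilon> * t)"
        by (simp add: power2_eq_square algebra_simps)
      moreover have "\<rho> * norm e > 0" using rho False by simp
      ultimately show ?thesis using mult_le_cancel_left_pos by blast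
    qed
    have mnb: "norm (m - n) \<le> 8 * \<epsilon>"
    proof -
      have "norm (D *\<^sub>R m - t *\<^sub>R n) \<le> 2 * \<epsilon> * t" using Dm2 eb by simp
      moreover have "\<bar>D - t\<bar> \<le> norm (D *\<^sub>R m - t *\<^sub>R n)"
        using norm_triangle_ineq3[of "D *\<^sub>R m" "t *\<^sub>R n"] mn n Dpos t1 by simp
      ultimately have Dt: "\<bar>D - t\<bar> \<le> 2 * \<epsilon> * t" by simp
      have "D *\<^sub>R (m - n) = (D *\<^sub>R m - t *\<^sub>R n) + (t - D) *\<^sub>R n" by (simp add: algebra_simps)
      then have "norm (D *\<^sub>R (m - n)) \<le> norm (D *\<^sub>R m - t *\<^sub>R n) + \<bar>t - D\<bar>"
        using norm_triangle_ineq[of "D *\<^sub>R m - t *\<^sub>R n" "(t - D) *\<^sub>R n"] n by simp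
      then have "D * norm (m - n) \<le> 4 * \<epsilon> * t" using Dt Dpos
        \<open>norm (D *\<^sub>R m - t *\<^sub>R n) \<le> 2 * \<epsilon> * t\<close> by (simp add: abs_minus_commute)
      moreover have "t / 2 \<le> D"
      proof -
        have "(2 * \<epsilon>) * t \<le> (1/2) * t" using e t1 by (intro mult_right_mono) auto
        then show ?thesis using Dt by linarith
      qed
      ultimately have "(t/2) * norm (m - n) \<le> 4 * \<epsilon> * t"
      proof -
        have "(t/2) * norm (m - n) \<le> D * norm (m - n)" using \<open>t/2 \<le> D\<close> by (intro mult_right_mono) auto
        then show ?thesis using \<open>D * norm (m - n) \<le> 4 * \<epsilon> * t\<close> by linarith
      qed
      then show ?thesis using t1 by (simp add: algebra_simps)
    qed
    show "\<exists>q m. q \<in> A \<and> norm m = 1 \<and> (\<forall>s'. 0 \<le> s' \<and> s' < R \<longrightarrow> nn A (q + s' *\<^sub>R m) = q) \<and>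
           dist q x \<le> 2 * \<epsilon> * t \<and> norm (m - n) \<le> 8 * \<epsilon>"
      using qA mn rayq eb ne mnb by auto
  qed
qed

lemma dual_normal:
  fixes A :: "'a::euclidean_space set"
  assumes clA: "closed A" and xA: "x \<in> A" and UR: "\<And>a. a \<in> A \<Longrightarrow> ball a R \<subseteq> Unp A"
    and R: "R > 0" and n: "norm n = 1" and hT: "\<And>u. u \<in> Tan A x \<Longrightarrow> n \<bullet> u \<le> 0"
    and s: "0 \<le> s" "s < R"
  shows "nn A (x + s *\<^sub>R n) = x"
proof (cases "s = 0")
  case True
  have "x \<in> Unp A" using UR[OF xA] R by auto
  then show ?thesis using True nn_unique[of x A x] xA by simp
next
  case False
  then have s0: "s > 0" using s by simp
  define z where "z = x + s *\<^sub>R n"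
  define g0 where "g0 = (R - s) / 2"
  have g0: "g0 > 0" using s by (simp add: g0_def)
  have dxz: "dist x z = s" using n s0 by (simp add: z_def dist_norm)
  have KU: "cball z g0 \<subseteq> Unp A"
  proof
    fix y assume "y \<in> cball z g0"
    then have "dist z y \<le> g0" by simp
    then have "dist x y < R" using dist_triangle[of x y z] dxz s by (simp add: g0_def)
    then show "y \<in> Unp A" using UR[OF xA] by auto
  qed
  have cont: "continuous_on (cball z g0) (nn A)" using nn_cont[OF clA compact_cball KU] .
  have zK: "z \<in> cball z g0" using g0 by simp
  show ?thesis unfolding z_def[symmetric]
  proof (rule ccontr)
    assume ne: "nn A z \<noteq> x"
    define e' where "e' = dist (nn A z) x / 3"
    have e': "e' > 0" using ne by (simp add: e'_def)
    obtain g1 where g1: "g1 > 0" and g1c: "\<And>w. w \<in> cball z g0 \<Longrightarrow> dist w z < g1 \<Longrightarrow> dist (nn A w) (nn A z) < e'"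
      using cont zK e' unfolding continuous_on_iff by metis
    define g where "g = min g1 g0"
    have g: "g > 0" using g1 g0 by (simp add: g_def)
    define \<epsilon> where "\<epsilon> = min (1/4) (g / (20 * R))"
    have eps: "\<epsilon> > 0" "\<epsilon> \<le> 1/4" using g R by (auto simp: \<epsilon>_def)
    have epsR: "\<epsilon> * (20 * R) \<le> g" using R by (simp add: \<epsilon>_def min_def divide_simps)
    obtain t0 where t0: "t0 > 0" and t0P: "\<And>t. 0 < t \<Longrightarrow> t < t0 \<Longrightarrow> (\<exists>q m. q \<in> A \<and> norm m = 1 \<and>
           (\<forall>s'. 0 \<le> s' \<and> s' < R \<longrightarrow> nn A (q + s' *\<^sub>R m) = q) \<and>
           dist q x \<le> 2 * \<epsilon> * t \<and> norm (m - n) \<le> 8 * \<epsilon>)"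
      using approx_normal[OF clA xA UR R n hT eps] by blast
    define t where "t = min (t0/2) (min (e'/2) (R/2))"
    have t: "0 < t" "t < t0" "t < e'" "t < R" using t0 e' R by (auto simp: t_def)
    obtain q m where qA: "q \<in> A" and mn: "norm m = 1"
      and rq: "\<forall>s'. 0 \<le> s' \<and> s' < R \<longrightarrow> nn A (q + s' *\<^sub>R m) = q"
      and dq: "dist q x \<le> 2 * \<epsilon> * t" and dm: "norm (m - n) \<le> 8 * \<epsilon>"
      using t0P[OF t(1,2)] by blast
    define w where "w = q + s *\<^sub>R m"
    have nw: "nn A w = q" using rq s by (simp add: w_def)
    have "w - z = (q - x) + s *\<^sub>R (m - n)" by (simp add: w_def z_def algebra_simps)
    then have "dist w z \<le> dist q x + s * norm (m - n)"
      using norm_triangle_ineq[of "q - x" "s *\<^sub>R (m - n)"] s by (simp add: dist_norm)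
    also have "\<dots> \<le> 2 * \<epsilon> * t + s * (8 * \<epsilon>)"
      using dq dm s by (intro add_mono mult_left_mono) auto
    also have "\<dots> \<le> 2 * \<epsilon> * R + R * (8 * \<epsilon>)"
      using t s eps by (intro add_mono mult_left_mono mult_right_mono) auto
    also have "\<dots> = \<epsilon> * (20 * R) / 2" by (simp add: algebra_simps)
    also have "\<dots> < g"
    proof -
      have "\<epsilon> * (20 * R) > 0" using eps R by simp
      then show ?thesis using epsR by linarith
    qed
    finally have dwz: "dist w z < g" .
    then have "w \<in> cball z g0" "dist w z < g1" by (auto simp: g_def dist_commute)
    then have "dist q (nn A z) < e'" using g1c nw by fastforce
    moreover have "dist q x < e'"
    proof -
      have "2 * \<epsilon> * t \<le> (1/2) * t" using eps t by (intro mult_right_mono) auto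
      then show ?thesis using dq t by linarith
    qed
    moreover have "dist (nn A z) x \<le> dist (nn A z) q + dist q x" by (rule dist_triangle)
    ultimately show False using e'_def e' by (simp add: dist_commute)
  qed
qed

lemma unit_line:
  fixes S :: "'a::euclidean_space set"
  assumes "dim (span S) = 1"
  shows "\<exists>u. norm u = 1 \<and> span S = span {u}"
proof -
  obtain B where B: "B \<subseteq> span S" "independent B" "span S \<subseteq> span B" "card B = dim (span S)"
    using basis_exists by blast
  have "card B = 1" using B(4) assms by simp
  then obtain b where b: "B = {b}" by (rule card_1_singletonE)
  have b0: "b \<noteq> 0" using B(2) b by auto
  have eq: "span S = span {b}"
    using B b by (metis span_mono span_span subset_antisym)
  define u where "u = b /\<^sub>R norm b"
  have "span {u} = span {b}"
    unfolding real_vector.span_singleton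
  proof (intro set_eqI iffI)
    fix v assume "v \<in> range (\<lambda>k. k *\<^sub>R u)"
    then obtain k where "v = k *\<^sub>R u" by auto
    then have "v = (k / norm b) *\<^sub>R b" by (simp add: u_def divide_inverse_commute)
    then show "v \<in> range (\<lambda>k. k *\<^sub>R b)" by auto
  next
    fix v assume "v \<in> range (\<lambda>k. k *\<^sub>R b)"
    then obtain k where "v = k *\<^sub>R b" by auto
    then have "v = (k * norm b) *\<^sub>R u" using b0 by (simp add: u_def)
    then show "v \<in> range (\<lambda>k. k *\<^sub>R u)" by auto
  qed
  moreover have "norm u = 1" using b0 by (simp add: u_def)
  ultimately show ?thesis using eq by metis
qed

lemma tangent_est:
  fixes A :: "'a::euclidean_space set"
  assumes clA: "closed A" and xA: "x \<in> A" and UR: "\<And>a. a \<in> A \<Longrightarrow> ball a R \<subseteq> Unp A"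
    and r: "0 < r" "r < R" and u: "norm u = 1" and Tsub: "Tan A x \<subseteq> span {u}" and bA: "b \<in> A"
  shows "norm (b - x) ^ 2 - ((b - x) \<bullet> u) ^ 2 \<le> (norm (b - x) ^ 2 / (2 * r)) ^ 2"
proof -
  define e where "e = b - x"
  define w where "w = e - (e \<bullet> u) *\<^sub>R u"
  have uu: "u \<bullet> u = 1" using u by (metis norm_eq_1)
  have wu: "w \<bullet> u = 0" using uu by (simp add: w_def inner_diff_left)
  have we: "w \<bullet> e = norm e ^ 2 - (e \<bullet> u) ^ 2"
    by (simp add: w_def inner_diff_left inner_diff_right dot_square_norm inner_commute power2_eq_square)
  have ww: "w \<bullet> w = norm e ^ 2 - (e \<bullet> u) ^ 2"
  proof -
    have "w \<bullet> w = w \<bullet> e - (e \<bullet> u) * (w \<bullet> u)" by (simp add: w_def inner_diff_right) 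
    then show ?thesis using wu we by simp
  qed
  show ?thesis
  proof (cases "w = 0")
    case True
    then have "norm e ^ 2 - (e \<bullet> u) ^ 2 = 0" using ww by simp
    then show ?thesis by (simp add: e_def)
  next
    case False
    define n where "n = w /\<^sub>R norm w"
    have nn1: "norm n = 1" using False by (simp add: n_def)
    have hT: "n \<bullet> v \<le> 0" if "v \<in> Tan A x" for v
    proof -
      have "v \<in> span {u}" using that Tsub by auto
      then obtain k where "v = k *\<^sub>R u" unfolding real_vector.span_singleton by auto
      then show ?thesis using wu by (simp add: n_def inner_commute)
    qed
    have R: "R > 0" using r by simp
    have "nn A (x + r *\<^sub>R n) = x" using dual_normal[OF clA xA UR R nn1 hT] r by simp
    moreover have "x + r *\<^sub>R n \<in> Unp A" using UR[OF xA] r nn1 by (auto simp: dist_norm)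
    ultimately have "dist (x + r *\<^sub>R n) x \<le> dist (x + r *\<^sub>R n) b"
      using nn_prop(2)[of "x + r *\<^sub>R n" A b] bA by simp
    then have "r \<le> norm (r *\<^sub>R n - e)" using r nn1 by (simp add: dist_norm e_def algebra_simps)
    then have "r^2 \<le> (norm (r *\<^sub>R n - e))^2" using r by simp
    also have "\<dots> = r^2 - 2 * r * (n \<bullet> e) + norm e ^ 2"
    proof -
      have nn2: "n \<bullet> n = 1" using nn1 by (metis norm_eq_1)
      show ?thesis unfolding power2_norm_eq_inner using nn2
        by (simp add: inner_diff_left inner_diff_right inner_commute power2_eq_square algebra_simps)
    qed
    finally have ne: "2 * r * (n \<bullet> e) \<le> norm e ^ 2" by simp
    have "n \<bullet> e = norm w"
    proof -
      have "w \<bullet> e = norm w * norm w" using we ww by (simp add: dot_square_norm power2_eq_square)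
      then show ?thesis using False by (simp add: n_def)
    qed
    then have "norm w \<le> norm e ^ 2 / (2 * r)" using ne r by (simp add: field_simps)
    then have "norm w ^ 2 \<le> (norm e ^ 2 / (2 * r)) ^ 2" by (simp add: power_mono)
    then show ?thesis using ww by (simp add: power2_norm_eq_inner e_def)
  qed
qed

lemma alg:
  fixes a b t c :: real
  assumes "1 - a ^ 2 \<le> c ^ 2" "1 - b ^ 2 \<le> c ^ 2" "\<bar>t - a*b\<bar> \<le> c ^ 2" "0 \<le> c" "c \<le> 1/2"
  shows "1 - t ^ 2 \<le> 4*c ^ 2"
proof -
  have c2: "c ^ 2 \<le> 1/4" using assms(4,5) power_mono[of c "1/2" 2] by (simp add: power2_eq_square)
  have "(1 - c ^ 2) * (1 - c ^ 2) \<le> a ^ 2 * b ^ 2"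
    using assms(1,2) c2 by (intro mult_mono) auto
  then have "(1 - c ^ 2) ^ 2 \<le> \<bar>a*b\<bar> ^ 2" by (simp add: power2_eq_square power_mult_distrib algebra_simps)
  then have ab: "1 - c ^ 2 \<le> \<bar>a*b\<bar>" by (rule power2_le_imp_le) simp
  have "\<bar>a*b\<bar> - \<bar>t\<bar> \<le> \<bar>t - a*b\<bar>" by linarith
  then have tge: "1 - 2*c ^ 2 \<le> \<bar>t\<bar>" using ab assms(3) by linarith
  have "0 \<le> 1 - 2*c ^ 2" using c2 by simp
  then have "(1 - 2*c ^ 2) ^ 2 \<le> \<bar>t\<bar> ^ 2" using tge by (intro power_mono) auto
  then have "1 - 4*c ^ 2 + 4*(c ^ 2) ^ 2 \<le> t ^ 2" by (simp add: power2_eq_square algebra_simps)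
  moreover have "0 \<le> (c ^ 2) ^ 2" by simp
  ultimately show ?thesis by linarith
qed

lemma infdist_line:
  fixes z v :: "'a::euclidean_space"
  assumes "norm z = 1" "norm v = 1" "1 - (z \<bullet> v) ^ 2 \<le> B ^ 2" "0 \<le> B"
  shows "infdist z (span {v}) \<le> B"
proof -
  define p where "p = (z \<bullet> v) *\<^sub>R v"
  have pin: "p \<in> span {v}" unfolding p_def by (simp add: span_base span_scale)
  have zz: "z \<bullet> z = 1" using assms(1) by (metis norm_eq_1)
  have vv: "v \<bullet> v = 1" using assms(2) by (metis norm_eq_1)
  have "(dist z p) ^ 2 = 1 - (z \<bullet> v) ^ 2"
    unfolding dist_norm power2_norm_eq_inner p_def using zz vv
    by (simp add: inner_diff_left inner_diff_right inner_commute power2_eq_square algebra_simps)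
  then have "(dist z p) ^ 2 \<le> B ^ 2" using assms(3) by simp
  then have "dist z p \<le> B" using assms(4) by (rule power2_le_imp_le)
  then show ?thesis using infdist_le2[OF pin] by blast
qed

lemma rho1_lines:
  fixes u v :: "'a::euclidean_space"
  assumes u: "norm u = 1" and v: "norm v = 1" and t: "1 - (u \<bullet> v) ^ 2 \<le> B ^ 2" and B: "0 \<le> B"
  shows "rho1 (span {u}) (span {v}) \<le> B"
proof -
  have gen: "(SUP z\<in>{z\<in>span {u}. norm z = 1}. infdist z (span {v})) \<le> B"
    if u: "norm u = 1" and v: "norm v = 1" and t: "1 - (u \<bullet> v) ^ 2 \<le> B ^ 2" for u v :: 'a
  proof (rule cSUP_least)
    show "{z \<in> span {u}. norm z = 1} \<noteq> {}" using u span_base[of u "{u}"] by auto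
    fix z assume zin: "z \<in> {z \<in> span {u}. norm z = 1}"
    then obtain k where z1: "z = k *\<^sub>R u" unfolding real_vector.span_singleton by blast
    have z: "z = k *\<^sub>R u" "norm z = 1" using z1 zin by auto
    then have "\<bar>k\<bar> = 1" using u by simp
    then have "k * k = 1" by (metis abs_mult_self_eq mult_1_right)
    then have "(z \<bullet> v) ^ 2 = (u \<bullet> v) ^ 2" using z by (simp add: power2_eq_square algebra_simps)
    then show "infdist z (span {v}) \<le> B" using infdist_line[OF z(2) v _ B] t by simp
  qed
  have "1 - (v \<bullet> u) ^ 2 \<le> B ^ 2" using t by (simp add: inner_commute)
  then show ?thesis unfolding rho1_def using gen[OF u v t] gen[OF v u] by simp
qed

theorem proposition3p4:
  fixes A :: "'a::euclidean_space set" and r :: real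
  assumes "0 < r" and "ereal r < reach A"
  shows "\<forall>x\<in>T1 A. \<forall>y\<in>T1 A. rho1 (psi1 A x) (psi1 A y) \<le> (1 / r) * dist x y"
proof -
  obtain R where R1: "ereal r < ereal R" and R2: "ereal R < reach A"
    using ereal_dense2[OF assms(2)] by blast
  have rR: "r < R" using R1 by simp
  have Rpos: "R > 0" using rR assms(1) by simp
  have UR: "ball a R \<subseteq> Unp A" if aA: "a \<in> A" for a
  proof -
    have "reach A \<le> reach_at A a" unfolding reach_def using aA by (rule INF_lower)
    then have "ereal R < Sup {ereal r' | r'. r' \<ge> 0 \<and> ball a r' \<subseteq> Unp A}"
      using R2 by (simp add: reach_at_def)
    then obtain y where "y \<in> {ereal r' | r'. r' \<ge> 0 \<and> ball a r' \<subseteq> Unp A}" "ereal R < y"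
      using less_Sup_iff by blast
    then obtain r' where "ball a r' \<subseteq> Unp A" "R < r'" by auto
    then show ?thesis using subset_ball[of R r' a] by auto
  qed
  have clA: "closed A" using closed_A[OF Rpos UR] by blast
  have line: "\<exists>u. norm u = 1 \<and> psi1 A x = span {u} \<and> Tan A x \<subseteq> span {u}" if "x \<in> T1 A" for x
  proof -
    have "dim (span (Tan A x)) = 1" using that by (simp add: T1_def Tan_span_def)
    then obtain u where u: "norm u = 1" "span (Tan A x) = span {u}" using unit_line by blast
    then have "Tan A x \<subseteq> span {u}" using span_superset[of "Tan A x"] by simp
    then show ?thesis using u by (auto simp: psi1_def Tan_span_def)
  qed
  show ?thesis
  proof (intro ballI)
    fix x y assume x: "x \<in> T1 A" and y: "y \<in> T1 A"
    have xA: "x \<in> A" and yA: "y \<in> A" using x y by (auto simp: T1_def)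
    obtain u where u: "norm u = 1" "psi1 A x = span {u}" "Tan A x \<subseteq> span {u}" using line[OF x] by blast
    obtain v where v: "norm v = 1" "psi1 A y = span {v}" "Tan A y \<subseteq> span {v}" using line[OF y] by blast
    define \<delta> where "\<delta> = dist x y"
    have dpos: "\<delta> \<ge> 0" by (simp add: \<delta>_def)
    have uu: "u \<bullet> u = 1" using u(1) by (metis norm_eq_1)
    have vv: "v \<bullet> v = 1" using v(1) by (metis norm_eq_1)
    have tle: "(u \<bullet> v) ^ 2 \<le> 1" using Cauchy_Schwarz_ineq[of u v] uu vv by simp
    have key: "1 - (u \<bullet> v) ^ 2 \<le> (\<delta> / r) ^ 2"
    proof (cases "r \<le> \<delta>")
      case True
      then have "1 \<le> \<delta> / r" using assms(1) by simp
      then have "1 \<le> (\<delta> / r) ^ 2" by (simp add: one_le_power)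
      moreover have "0 \<le> (u \<bullet> v) ^ 2" by simp
      ultimately show ?thesis by linarith
    next
      case False
      show ?thesis
      proof (cases "\<delta> = 0")
        case True
        then have "x = y" by (simp add: \<delta>_def)
        then have "v \<in> span {u}" using u v span_base[of v "{v}"] by auto
        then obtain k where k: "v = k *\<^sub>R u" unfolding real_vector.span_singleton by blast
        then have "\<bar>k\<bar> = 1" using u v by simp
        then have "k * k = 1" by (metis abs_mult_self_eq mult_1_right)
        then have "(u \<bullet> v) ^ 2 = 1" using k uu by (simp add: power2_eq_square)
        then show ?thesis by simp
      next
        case d0: False
        then have dp: "\<delta> > 0" using dpos by simp
        define e where "e = y - x"
        have ne: "norm e = \<delta>" by (simp add: e_def \<delta>_def dist_norm norm_minus_commute)
        have est1: "norm e ^ 2 - (e \<bullet> u) ^ 2 \<le> (norm e ^ 2 / (2 * r)) ^ 2"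
          using tangent_est[OF clA xA UR assms(1) rR u(1) u(3) yA] by (simp add: e_def)
        have est2: "norm e ^ 2 - (e \<bullet> v) ^ 2 \<le> (norm e ^ 2 / (2 * r)) ^ 2"
        proof -
          have "norm (x - y) ^ 2 - ((x - y) \<bullet> v) ^ 2 \<le> (norm (x - y) ^ 2 / (2 * r)) ^ 2"
            using tangent_est[OF clA yA UR assms(1) rR v(1) v(3) xA] .
          moreover have "x - y = - e" by (simp add: e_def)
          ultimately show ?thesis by simp
        qed
        define c where "c = \<delta> / (2 * r)"
        have c: "0 \<le> c" "c \<le> 1/2" using dpos assms(1) False by (auto simp: c_def field_simps)
        define eh where "eh = e /\<^sub>R \<delta>"
        have ehh: "eh \<bullet> eh = 1" using ne dp by (simp add: eh_def dot_square_norm)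
        define a where "a = eh \<bullet> u"
        define b where "b = eh \<bullet> v"
        have conv: "1 - (eh \<bullet> w) ^ 2 \<le> c ^ 2"
          if "norm e ^ 2 - (e \<bullet> w) ^ 2 \<le> (norm e ^ 2 / (2 * r)) ^ 2" for w
        proof -
          have "\<delta> ^ 2 * (1 - (eh \<bullet> w) ^ 2) = norm e ^ 2 - (e \<bullet> w) ^ 2"
            using ne dp by (simp add: eh_def power2_eq_square field_simps)
          also have "\<dots> \<le> (norm e ^ 2 / (2 * r)) ^ 2" using that .
          also have "\<dots> = \<delta> ^ 2 * c ^ 2" using ne by (simp add: c_def power2_eq_square field_simps)
          finally show ?thesis using dp by simp
        qed
        have ha: "1 - a ^ 2 \<le> c ^ 2" using conv[OF est1] by (simp add: a_def)
        have hb: "1 - b ^ 2 \<le> c ^ 2" using conv[OF est2] by (simp add: b_def)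
        have a1: "a ^ 2 \<le> 1" using Cauchy_Schwarz_ineq[of eh u] ehh uu by (simp add: a_def)
        have b1: "b ^ 2 \<le> 1" using Cauchy_Schwarz_ineq[of eh v] ehh vv by (simp add: b_def)
        have iden: "(u \<bullet> v) - a * b = (u - a *\<^sub>R eh) \<bullet> (v - b *\<^sub>R eh)"
          using ehh by (simp add: a_def b_def inner_diff_left inner_diff_right inner_commute algebra_simps)
        have n1: "(u - a *\<^sub>R eh) \<bullet> (u - a *\<^sub>R eh) = 1 - a ^ 2"
          using ehh uu by (simp add: a_def inner_diff_left inner_diff_right inner_commute power2_eq_square algebra_simps)
        have n2: "(v - b *\<^sub>R eh) \<bullet> (v - b *\<^sub>R eh) = 1 - b ^ 2"
          using ehh vv by (simp add: b_def inner_diff_left inner_diff_right inner_commute power2_eq_square algebra_simps)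
        have "((u \<bullet> v) - a * b) ^ 2 \<le> (1 - a ^ 2) * (1 - b ^ 2)"
          using Cauchy_Schwarz_ineq[of "u - a *\<^sub>R eh" "v - b *\<^sub>R eh"] iden n1 n2 by simp
        also have "\<dots> \<le> c ^ 2 * c ^ 2" using ha hb a1 b1 by (intro mult_mono) auto
        finally have "\<bar>(u \<bullet> v) - a * b\<bar> ^ 2 \<le> (c ^ 2) ^ 2" by (simp add: power2_eq_square)
        then have "\<bar>(u \<bullet> v) - a * b\<bar> \<le> c ^ 2" by (rule power2_le_imp_le) simp
        then have "1 - (u \<bullet> v) ^ 2 \<le> 4 * c ^ 2" using alg[OF ha hb _ c] by blast
        also have "\<dots> = (\<delta> / r) ^ 2" by (simp add: c_def power2_eq_square field_simps)
        finally show ?thesis .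
      qed
    qed
    have "rho1 (span {u}) (span {v}) \<le> \<delta> / r"
      using rho1_lines[OF u(1) v(1) key] dpos assms(1) by simp
    then show "rho1 (psi1 A x) (psi1 A y) \<le> (1 / r) * dist x y" using u(2) v(2) by (simp add: \<delta>_def)
  qed
qed

end
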